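(* Let $\mathbb{Z}_{(p_n)}$ be an odometer with scale $(p_n)$. Then $$\operatorname{Aut}^{(\infty)}(\mathbb{Z}_{(p_n)},+\mathbf{1})=\bigcup_{n=1}^{\infty}\operatorname{Aut}(\mathbb{Z}_{(p_n)},+p_n\mathbf{1}),$$ where the union is taken inside $\operatorname{Homeo}(\mathbb{Z}_{(p_n)})$. Moreover, the same equality holds with $(p_n)$ replaced by any scale $(s_n)$ equivalent to $(p_n)$, i.e. $\operatorname{Aut}^{(\infty)}(\mathbb{Z}_{(p_n)},+\mathbf{1})=\bigcup_{n}\operatorname{Aut}(\mathbb{Z}_{(p_n)},+s_n\mathbf{1})$.
   Context: A scale is a sequence $(p_n)$ of positive integers with $p_n\mid p_{n+1}$, not eventually constant. The odometer is $\mathbb{Z}_{(p_n)}=\{(x_n)\in\prod_n\mathbb{Z}/p_n\mathbb{Z}: x_{n+1}\equiv x_n\bmod p_n\}$; $\mathbf{1}=(1,1,\dots)$ and $+c\mathbf{1}$ denotes translation by $c\mathbf{1}$. Two scales $(p_n),(s_n)$ are equivalent if $\lim_n\nu_p(p_n)=\lim_n\nu_p(s_n)$ (in $\mathbb{N}\cup\{0,\infty\}$) for every prime $p$, $\nu_p$ being the $p$-adic valuation. $\operatorname{Aut}(X,T)$ is the group of homeomorphisms commuting with $T$ and $\operatorname{Aut}^{(\infty)}(X,T)=\bigcup_{n\ge1}\operatorname{Aut}(X,T^n)\subseteq\operatorname{Homeo}(X)$. *)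

theory Defs
  imports "HOL-Analysis.Analysis" "HOL-Computational_Algebra.Primes" "HOL-Library.Extended_Nat"
begin

definition is_scale :: "(nat \<Rightarrow> nat) \<Rightarrow> bool" where
  "is_scale p \<longleftrightarrow> (\<forall>n. 0 < p n \<and> p n dvd p (Suc n)) \<and>
                    \<not> (\<exists>N. \<forall>n\<ge>N. p n = p N)"

definition lim_val :: "nat \<Rightarrow> (nat \<Rightarrow> nat) \<Rightarrow> enat" where
  "lim_val q p = (SUP n. enat (multiplicity q (p n)))"

definition scale_equiv :: "(nat \<Rightarrow> nat) \<Rightarrow> (nat \<Rightarrow> nat) \<Rightarrow> bool" where
  "scale_equiv p s \<longleftrightarrow> (\<forall>q. prime q \<longrightarrow> lim_val q p = lim_val q s)"

text \<open>The odometer as a subset of the product of the Z/p_n Z = {0..<p n}.\<close>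
definition odometer_set :: "(nat \<Rightarrow> nat) \<Rightarrow> (nat \<Rightarrow> nat) set" where
  "odometer_set p = {x. \<forall>n. x n < p n \<and> x (Suc n) mod p n = x n}"

definition odometer :: "(nat \<Rightarrow> nat) \<Rightarrow> (nat \<Rightarrow> nat) topology" where
  "odometer p = subtopology (product_topology (\<lambda>n. discrete_topology {..<p n}) UNIV)
                            (odometer_set p)"

text \<open>Translation by c times the element 1 = (1,1,...).\<close>
definition odo_add :: "(nat \<Rightarrow> nat) \<Rightarrow> nat \<Rightarrow> (nat \<Rightarrow> nat) \<Rightarrow> (nat \<Rightarrow> nat)" where
  "odo_add p c x = (\<lambda>n. (x n + c) mod p n)"

definition Aut :: "'a topology \<Rightarrow> ('a \<Rightarrow> 'a) \<Rightarrow> ('a \<Rightarrow> 'a) set" where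
  "Aut X T = {f. homeomorphic_map X X f \<and> (\<forall>x\<in>topspace X. f (T x) = T (f x))}"

definition Aut_inf :: "'a topology \<Rightarrow> ('a \<Rightarrow> 'a) \<Rightarrow> ('a \<Rightarrow> 'a) set" where
  "Aut_inf X T = (\<Union>n\<in>{1..}. Aut X (T ^^ n))"

end

theory Submission imports Defs begin

lemma odo_add_pow: "x \<in> odometer_set p \<Longrightarrow> ((odo_add p 1) ^^ k) x = odo_add p k x"
proof (induction k)
  case 0 then show ?case by (auto simp: odo_add_def fun_eq_iff odometer_set_def)
next
  case (Suc k) then show ?case by (auto simp: odo_add_def fun_eq_iff mod_simps)
qed

lemma odo_add_pow': "x \<in> odometer_set p \<Longrightarrow> ((odo_add p (Suc 0)) ^^ k) x = odo_add p k x"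
  using odo_add_pow[of x p k] by simp

lemma odo_add_add: "odo_add p a (odo_add p b x) = odo_add p (a + b) x"
  by (simp add: odo_add_def fun_eq_iff mod_simps ac_simps)

lemma topspace_odo: "topspace (odometer p) = odometer_set p"
  by (auto simp: odometer_def odometer_set_def PiE_def extensional_def)

lemma odo_add_in:
  assumes "\<And>n. p n dvd p (Suc n)" "\<And>n. 0 < p n" "x \<in> odometer_set p"
  shows "odo_add p c x \<in> odometer_set p"
  using assms by (auto simp: odometer_set_def odo_add_def mod_mod_cancel mod_simps)
     (metis mod_add_left_eq mod_mod_cancel)

lemma chain_dvd:
  assumes "\<And>n. p n dvd p (Suc n)" "i \<le> j"
  shows "(p i :: nat) dvd p j"
  using assms(2)
proof (induction j rule: dec_induct)
  case base then show ?case by simp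
next
  case (step n) then show ?case using assms(1) dvd_trans by blast
qed

lemma enat_le_SUP:
  assumes "enat t \<le> (SUP n. enat (f n))"
  shows "\<exists>n. t \<le> f n"
proof (cases t)
  case 0 then show ?thesis by simp
next
  case (Suc t')
  then have "enat t' < (SUP n. enat (f n))" using assms
    by (metis Suc_ile_eq)
  then obtain n where "enat t' < enat (f n)" by (auto simp: less_SUP_iff)
  then have "t \<le> f n" using Suc by simp
  then show ?thesis by blast
qed

lemma find_P:
  fixes p s :: "nat \<Rightarrow> nat"
  assumes sp: "\<And>n. 0 < s n" "\<And>n. s n dvd s (Suc n)"
    and pp: "\<And>n. 0 < p n"
    and eq: "scale_equiv p s" and m: "m > 0"
  shows "\<exists>N. \<forall>j. gcd m (p j) dvd s N"
proof -
  let ?Q = "prime_factors m"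
  have ex: "\<exists>n. \<forall>t. t \<le> multiplicity q m \<and> enat t \<le> lim_val q s \<longrightarrow> t \<le> multiplicity q (s n)"
    for q
  proof (cases "enat (multiplicity q m) \<le> lim_val q s")
    case True
    then obtain n where "multiplicity q m \<le> multiplicity q (s n)"
      using enat_le_SUP[OF True[unfolded lim_val_def]] by blast
    then show ?thesis by (meson order_trans)
  next
    case False
    then obtain L where L: "lim_val q s = enat L"
      by (cases "lim_val q s") auto
    have H: "enat L \<le> (SUP n. enat (multiplicity q (s n)))" using L unfolding lim_val_def by simp
    obtain n where n: "L \<le> multiplicity q (s n)"
      using enat_le_SUP[OF H] by blast
    have "t \<le> multiplicity q (s n)" if "enat t \<le> lim_val q s" for t
      using that L n by simp
    then show ?thesis by blast
  qed
  then have "\<forall>q. \<exists>n. \<forall>t. t \<le> multiplicity q m \<and> enat t \<le> lim_val q s \<longrightarrow> t \<le> multiplicity q (s n)"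
    by blast
  then obtain nq where nq0: "\<forall>q. \<forall>t. t \<le> multiplicity q m \<and> enat t \<le> lim_val q s \<longrightarrow> t \<le> multiplicity q (s (nq q))"
    by (rule choice[THEN exE])
  then have nq: "\<And>q t. t \<le> multiplicity q m \<Longrightarrow> enat t \<le> lim_val q s \<Longrightarrow> t \<le> multiplicity q (s (nq q))"
    by blast
  define N where "N = Max (nq ` ?Q \<union> {0})"
  have mono: "multiplicity q (s a) \<le> multiplicity q (s b)" if "a \<le> b" for q a b
    using dvd_imp_multiplicity_le[OF chain_dvd[of s, OF sp(2) that]] sp(1)[of b] by simp
  have "gcd m (p j) dvd s N" for j
  proof (rule multiplicity_le_imp_dvd)
    show "gcd m (p j) \<noteq> 0" using m by simp
    fix q :: nat assume q: "prime q"
    let ?t = "multiplicity q (gcd m (p j))"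
    have t1: "?t \<le> multiplicity q m" using m by (intro dvd_imp_multiplicity_le) auto
    have t2: "?t \<le> multiplicity q (p j)" using pp[of j] by (intro dvd_imp_multiplicity_le) auto
    have "enat (multiplicity q (p j)) \<le> lim_val q p" unfolding lim_val_def by (rule SUP_upper) simp
    then have t3: "enat ?t \<le> lim_val q s" using eq q t2 unfolding scale_equiv_def
      by (metis enat_ord_simps(1) order_trans)
    show "?t \<le> multiplicity q (s N)"
    proof (cases "q \<in> ?Q")
      case True
      then have "nq q \<le> N" unfolding N_def by (intro Max_ge) auto
      then show ?thesis using nq[OF t1 t3] mono by (meson order_trans)
    next
      case False
      then have "multiplicity q m = 0" using q m
        by (intro not_dvd_imp_multiplicity_0) (simp add: in_prime_factors_iff)
      then show ?thesis using t1 by simp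
    qed
  qed
  then show ?thesis by blast
qed

lemma solve_nat:
  fixes m n d :: nat
  assumes "gcd m n dvd d" "m > 0"
  shows "\<exists>x. (m * x) mod n = d mod n"
proof -
  obtain x y where xy: "m * x = n * y + gcd m n" using bezout_nat[of m n] assms(2) by auto
  obtain c where c: "d = gcd m n * c" using assms(1) by blast
  have "m * (x * c) = n * (y * c) + d" using xy c by (simp add: algebra_simps)
  then have "(m * (x * c)) mod n = d mod n" by simp
  then show ?thesis by blast
qed

lemma homeo_in:
  assumes "homeomorphic_map X X f" "x \<in> topspace X"
  shows "f x \<in> topspace X"
proof -
  have "f ` topspace X = topspace X" by (rule homeomorphic_imp_surjective_map[OF assms(1)])
  then show ?thesis using assms(2) by blast
qed

lemma Aut_cong:
  assumes "\<And>x. x \<in> topspace X \<Longrightarrow> T x = T' x"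
  shows "Aut X T = Aut X T'"
proof -
  have key: "(\<forall>x\<in>topspace X. f (T x) = T (f x)) \<longleftrightarrow> (\<forall>x\<in>topspace X. f (T' x) = T' (f x))"
    if f: "homeomorphic_map X X f" for f
  proof -
    have "f (T x) = T (f x) \<longleftrightarrow> f (T' x) = T' (f x)" if x: "x \<in> topspace X" for x
      using assms[OF x] assms[OF homeo_in[OF f x]] by simp
    then show ?thesis by blast
  qed
  show ?thesis unfolding Aut_def using key by blast
qed

lemma main:
  fixes p s :: "nat \<Rightarrow> nat"
  assumes pp: "\<And>n. 0 < p n" "\<And>n. p n dvd p (Suc n)"
    and sp: "\<And>n. 0 < s n" "\<And>n. s n dvd s (Suc n)"
    and eq: "scale_equiv p s"
  shows "Aut_inf (odometer p) (odo_add p 1) = (\<Union>n. Aut (odometer p) (odo_add p (s n)))"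
proof -
  define X where "X = odometer p"
  define Od where "Od = odometer_set p"
  have tX: "topspace X = Od" unfolding X_def Od_def by (rule topspace_odo)
  have A1: "Aut_inf X (odo_add p 1) = (\<Union>n\<in>{1..}. Aut X (odo_add p n))"
    unfolding Aut_inf_def
    by (intro SUP_cong refl Aut_cong) (simp add: tX Od_def odo_add_pow')
  have inO: "odo_add p c x \<in> Od" if "x \<in> Od" for c x
    using odo_add_in[of p, OF pp(2) pp(1)] that unfolding Od_def by blast
  have zero: "odo_add p 0 x = x" if "x \<in> Od" for x
    using that by (auto simp: Od_def odometer_set_def odo_add_def fun_eq_iff)
  have sub: "Aut X (odo_add p m) \<subseteq> (\<Union>n. Aut X (odo_add p (s n)))" if m: "m \<ge> 1" for m
  proof
    fix f assume f: "f \<in> Aut X (odo_add p m)"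
    then have hf: "homeomorphic_map X X f" and cf: "\<And>x. x \<in> Od \<Longrightarrow> f (odo_add p m x) = odo_add p m (f x)"
      unfolding Aut_def using tX by auto
    have fO: "f x \<in> Od" if "x \<in> Od" for x
      using homeo_in[OF hf] that tX by blast
    have comm: "f (odo_add p (k * m) x) = odo_add p (k * m) (f x)" if "x \<in> Od" for k x
    proof (induction k)
      case 0 then show ?case using zero that fO by simp
    next
      case (Suc k)
      have "f (odo_add p (Suc k * m) x) = f (odo_add p m (odo_add p (k * m) x))"
        by (simp add: odo_add_add)
      also have "\<dots> = odo_add p m (f (odo_add p (k * m) x))" using cf inO that by blast
      also have "\<dots> = odo_add p (Suc k * m) (f x)" using Suc by (simp add: odo_add_add)
      finally show ?case .
    qed
    obtain N where N: "\<And>j. gcd m (p j) dvd s N"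
      using find_P[of s p m, OF sp pp(1) eq] m by auto
    define P where "P = s N"
    have "\<forall>j. \<exists>k. (m * k) mod p j = P mod p j"
      using solve_nat N m unfolding P_def by auto
    then obtain k where k: "\<And>j. (m * k j) mod p j = P mod p j" by metis
    have kmod: "(y + k j * m) mod p i = (y + P) mod p i" if "i \<le> j" for y i j
    proof -
      have d: "p i dvd p j" using chain_dvd[of p, OF pp(2) that] .
      have "(k j * m) mod p i = P mod p i"
        using k[of j] d by (metis mod_mod_cancel mult.commute)
      then show ?thesis by (metis mod_add_right_eq)
    qed
    have "f (odo_add p P x) = odo_add p P (f x)" if x: "x \<in> Od" for x
    proof
      fix i
      define z where "z j = odo_add p (k j * m) x" for j
      define l where "l = odo_add p P x"
      have lO: "l \<in> Od" using inO x l_def by blast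
      have lim: "limitin X z l sequentially"
        unfolding X_def odometer_def limitin_subtopology
      proof (intro conjI)
        show "l \<in> odometer_set p" using lO Od_def by simp
        show "\<forall>\<^sub>F a in sequentially. z a \<in> odometer_set p"
          using inO x by (simp add: z_def Od_def)
        show "limitin (product_topology (\<lambda>n. discrete_topology {..<p n}) UNIV) z l sequentially"
          unfolding limitin_componentwise
        proof (intro conjI ballI)
          show "l \<in> extensional UNIV" by simp
          have "z a \<in> topspace (product_topology (\<lambda>n. discrete_topology {..<p n}) UNIV)" for a
            using inO[OF x, of "k a * m"] by (simp add: z_def Od_def odometer_set_def PiE_iff)
          then show "\<forall>\<^sub>F a in sequentially. z a \<in> topspace (product_topology (\<lambda>n. discrete_topology {..<p n}) UNIV)"
            by simp
          fix i :: nat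
          show "limitin (discrete_topology {..<p i}) (\<lambda>c. z c i) (l i) sequentially"
            unfolding limitin_sequentially
          proof (intro conjI allI impI)
            show "l i \<in> topspace (discrete_topology {..<p i})"
              using lO by (simp add: Od_def odometer_set_def)
            fix U assume "openin (discrete_topology {..<p i}) U \<and> l i \<in> U"
            then have "l i \<in> U" by simp
            moreover have "\<forall>n\<ge>i. z n i = l i"
              using kmod by (simp add: z_def l_def odo_add_def)
            ultimately show "\<exists>N. \<forall>n\<ge>N. z n i \<in> U" by (intro exI[of _ i]) auto
          qed
        qed
      qed
      have cX: "continuous_map X X f" using hf homeomorphic_imp_continuous_map by blast
      have cp: "continuous_map X (discrete_topology {..<p i}) (\<lambda>y. y i)"
        unfolding X_def odometer_def
        by (rule continuous_map_from_subtopology) (rule continuous_map_product_projection, simp)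
      have cg: "continuous_map X (discrete_topology {..<p i}) ((\<lambda>y. y i) \<circ> f)"
        using continuous_map_compose[OF cX cp] .
      have "limitin (discrete_topology {..<p i}) (((\<lambda>y. y i) \<circ> f) \<circ> z) (((\<lambda>y. y i) \<circ> f) l) sequentially"
        using continuous_map_limit[OF cg lim] .
      then have "\<exists>N'. \<forall>n\<ge>N'. f (z n) i = f l i"
        unfolding limitin_sequentially by (drule_tac conjunct2, drule_tac x="{f l i}" in spec) auto
      then obtain N' where N': "\<And>n. n \<ge> N' \<Longrightarrow> f (z n) i = f l i" by blast
      have "f l i = f (z (max N' i)) i" using N' by simp
      also have "\<dots> = odo_add p (k (max N' i) * m) (f x) i" using comm x z_def by simp
      also have "\<dots> = odo_add p P (f x) i" using kmod by (simp add: odo_add_def)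
      finally show "f (odo_add p P x) i = odo_add p P (f x) i" by (simp add: l_def)
    qed
    then have "f \<in> Aut X (odo_add p (s N))" using hf tX unfolding Aut_def P_def by auto
    then show "f \<in> (\<Union>n. Aut X (odo_add p (s n)))" by blast
  qed
  have "(\<Union>n\<in>{1..}. Aut X (odo_add p n)) = (\<Union>n. Aut X (odo_add p (s n)))"
  proof
    show "(\<Union>n\<in>{1..}. Aut X (odo_add p n)) \<subseteq> (\<Union>n. Aut X (odo_add p (s n)))"
      using sub by auto
    show "(\<Union>n. Aut X (odo_add p (s n))) \<subseteq> (\<Union>n\<in>{1..}. Aut X (odo_add p n))"
    proof
      fix f assume "f \<in> (\<Union>n. Aut X (odo_add p (s n)))"
      then obtain n where "f \<in> Aut X (odo_add p (s n))" by blast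
      moreover have "s n \<in> {1..}" using sp(1)[of n] by simp
      ultimately show "f \<in> (\<Union>n\<in>{1..}. Aut X (odo_add p n))" by blast
    qed
  qed
  then show ?thesis using A1 X_def by simp
qed

theorem corollary3p3:
  fixes p s :: "nat \<Rightarrow> nat"
  assumes "is_scale p" and "is_scale s" and "scale_equiv p s"
  shows "Aut_inf (odometer p) (odo_add p 1) = (\<Union>n. Aut (odometer p) (odo_add p (p n)))
       \<and> Aut_inf (odometer p) (odo_add p 1) = (\<Union>n. Aut (odometer p) (odo_add p (s n)))"
proof -
  have pp: "\<And>n. 0 < p n" "\<And>n. p n dvd p (Suc n)" using assms(1) unfolding is_scale_def by auto
  have sp: "\<And>n. 0 < s n" "\<And>n. s n dvd s (Suc n)" using assms(2) unfolding is_scale_def by auto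
  have pe: "scale_equiv p p" unfolding scale_equiv_def by simp
  have A: "Aut_inf (odometer p) (odo_add p 1) = (\<Union>n. Aut (odometer p) (odo_add p (p n)))"
    by (rule main[of p p]) (use pp pe in auto)
  have B: "Aut_inf (odometer p) (odo_add p 1) = (\<Union>n. Aut (odometer p) (odo_add p (s n)))"
    by (rule main[of p s]) (use pp sp assms(3) in auto)
  show ?thesis using A B by blast
qed

end
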